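(* For every $\varepsilon>0$ there exist a graph $G$ and an induced subgraph $H$ of $G$ such that $\operatorname{cdim}(H)>0$ and \[ \frac{\operatorname{cdim}(G)}{\operatorname{cdim}(H)}\leq \varepsilon. \]
   Context: All graphs are finite, simple, undirected and nonempty. For distinct vertices $v,w$, $\kappa(v,w)$ is the maximum number of internally vertex-disjoint $v$–$w$ paths (an edge $vw$ counts as one such path); $\kappa(v,v)=\infty$. For an ordered vertex set $W=(w_1,\ldots,w_k)$, $r_G(v,W)=[\kappa(v,w_1),\ldots,\kappa(v,w_k)]$. $W$ is resolving if $r_G(v_1,W)=r_G(v_2,W)$ implies $v_1=v_2$. The connectivity dimension $\operatorname{cdim}(G)$ is the minimum cardinality of a resolving set. *)

theory Defs
  imports Main "HOL-Library.Extended_Nat"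
begin

record 'a sgraph =
  verts :: "'a set"
  edges :: "'a set set"

definition is_graph :: "'a sgraph \<Rightarrow> bool" where
  "is_graph G \<longleftrightarrow> finite (verts G) \<and> verts G \<noteq> {} \<and>
     edges G \<subseteq> {{u, v} | u v. u \<in> verts G \<and> v \<in> verts G \<and> u \<noteq> v}"

definition adj :: "'a sgraph \<Rightarrow> 'a \<Rightarrow> 'a \<Rightarrow> bool" where
  "adj G u v \<longleftrightarrow> {u, v} \<in> edges G"

definition is_path :: "'a sgraph \<Rightarrow> 'a \<Rightarrow> 'a \<Rightarrow> 'a list \<Rightarrow> bool" where
  "is_path G v w p \<longleftrightarrow> p \<noteq> [] \<and> distinct p \<and> hd p = v \<and> last p = w \<and>
     set p \<subseteq> verts G \<and> (\<forall>i. Suc i < length p \<longrightarrow> adj G (p ! i) (p ! Suc i))"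

definition interior :: "'a list \<Rightarrow> 'a set" where
  "interior p = set (butlast (tl p))"

definition int_disjoint_paths :: "'a sgraph \<Rightarrow> 'a \<Rightarrow> 'a \<Rightarrow> 'a list set \<Rightarrow> bool" where
  "int_disjoint_paths G v w P \<longleftrightarrow> (\<forall>p\<in>P. is_path G v w p) \<and>
     (\<forall>p\<in>P. \<forall>q\<in>P. p \<noteq> q \<longrightarrow> interior p \<inter> interior q = {})"

definition kappa :: "'a sgraph \<Rightarrow> 'a \<Rightarrow> 'a \<Rightarrow> enat" where
  "kappa G v w = (if v = w then \<infinity>
     else Sup {enat (card P) | P. finite P \<and> int_disjoint_paths G v w P})"

text \<open>Resolving set (the order of W is irrelevant for the resolving property).\<close>
definition resolving :: "'a sgraph \<Rightarrow> 'a set \<Rightarrow> bool" where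
  "resolving G W \<longleftrightarrow> W \<subseteq> verts G \<and>
     (\<forall>v1\<in>verts G. \<forall>v2\<in>verts G. (\<forall>w\<in>W. kappa G v1 w = kappa G v2 w) \<longrightarrow> v1 = v2)"

definition cdim :: "'a sgraph \<Rightarrow> nat" where
  "cdim G = (LEAST k. \<exists>W. resolving G W \<and> card W = k)"

definition induced_subgraph :: "'a sgraph \<Rightarrow> 'a sgraph \<Rightarrow> bool" where
  "induced_subgraph H G \<longleftrightarrow> verts H \<noteq> {} \<and> verts H \<subseteq> verts G \<and>
     edges H = {e \<in> edges G. e \<subseteq> verts H}"

end

theory Submission imports Defs "HOL-Library.Extended_Nat" begin

lemma adj_sym: "adj G u v = adj G v u"
  by (simp add: adj_def insert_commute)

lemma adj_verts: "is_graph G \<Longrightarrow> adj G u v \<Longrightarrow> u \<in> verts G \<and> v \<in> verts G \<and> u \<noteq> v"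
  unfolding is_graph_def adj_def
  by (auto simp: doubleton_eq_iff)

lemma path_len2:
  assumes "is_path G u w p" "u \<noteq> w"
  shows "length p \<ge> 2"
proof -
  have "p \<noteq> []" "hd p = u" "last p = w" using assms unfolding is_path_def by auto
  then show ?thesis using assms(2)
    by (cases p; cases "tl p") auto
qed

lemma path_second:
  assumes "is_path G u w p" "u \<noteq> w"
  shows "adj G u (p!1) \<and> (length p = 2 \<longrightarrow> p = [u,w]) \<and>
    (length p \<noteq> 2 \<longrightarrow> p!1 \<in> interior p \<and> p!1 \<noteq> w)"
proof -
  have L: "length p \<ge> 2" using path_len2[OF assms] .
  have P: "p \<noteq> []" "distinct p" "hd p = u" "last p = w"
    "\<And>i. Suc i < length p \<Longrightarrow> adj G (p ! i) (p ! Suc i)" using assms unfolding is_path_def by auto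
  have h0: "p!0 = u" using P L by (simp add: hd_conv_nth)
  have a: "adj G u (p!1)" using P(5)[of 0] L h0 by auto
  have b: "length p = 2 \<longrightarrow> p = [u,w]"
  proof
    assume "length p = 2"
    then obtain x y where "p = [x,y]"
      by (metis One_nat_def Suc_1 length_0_conv length_Suc_conv)
    then show "p = [u,w]" using P by auto
  qed
  have c: "length p \<noteq> 2 \<longrightarrow> p!1 \<in> interior p \<and> p!1 \<noteq> w"
  proof
    assume "length p \<noteq> 2"
    then have L3: "length p \<ge> 3" using L by auto
    have "butlast (tl p) ! 0 = p ! 1" using L3
      by (simp add: nth_butlast nth_tl)
    moreover have "length (butlast (tl p)) > 0" using L3 by simp
    ultimately have "p!1 \<in> interior p" unfolding interior_def
      by (metis nth_mem)
    moreover have "p!1 \<noteq> w"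
    proof
      assume "p!1 = w"
      then have "p!1 = p!(length p - 1)" using P by (simp add: last_conv_nth)
      then show False using P(2) L3 by (simp add: nth_eq_iff_index_eq)
    qed
    ultimately show "p!1 \<in> interior p \<and> p!1 \<noteq> w" by blast
  qed
  show ?thesis using a b c by blast
qed

lemma kappa_upper:
  assumes G: "is_graph G" and uw: "u \<noteq> w"
  shows "kappa G u w \<le> enat (card {x. adj G u x})"
proof -
  have fin: "finite {x. adj G u x}"
    using adj_verts[OF G] G unfolding is_graph_def
    by (metis (no_types, lifting) mem_Collect_eq rev_finite_subset subsetI)
  have "card P \<le> card {x. adj G u x}" if "int_disjoint_paths G u w P" for P
  proof -
    have paths: "\<And>p. p \<in> P \<Longrightarrow> is_path G u w p" and dis: "\<And>p q. p \<in> P \<Longrightarrow> q \<in> P \<Longrightarrow> p \<noteq> q \<Longrightarrow> interior p \<inter> interior q = {}"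
      using that unfolding int_disjoint_paths_def by auto
    have "inj_on (\<lambda>p. p!1) P"
    proof (rule inj_onI)
      fix p q assume pq: "p \<in> P" "q \<in> P" "p!1 = q!1"
      show "p = q"
      proof (rule ccontr)
        assume ne: "p \<noteq> q"
        note sp = path_second[OF paths[OF pq(1)] uw] and sq = path_second[OF paths[OF pq(2)] uw]
        show False
        proof (cases "length p = 2")
          case True
          then have "p!1 = w" using sp by auto
          then have "length q = 2" using sq pq(3) by auto
          then show False using sp sq True ne by auto
        next
          case False
          then have "length q \<noteq> 2" using sp sq pq(3) by (metis nth_Cons_0 nth_Cons_Suc One_nat_def)
          then show False using sp sq False dis[OF pq(1,2) ne] pq(3) by auto
        qed
      qed
    qed
    moreover have "(\<lambda>p. p!1) ` P \<subseteq> {x. adj G u x}" using path_second[OF paths uw] by auto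
    ultimately show ?thesis using fin by (meson card_inj_on_le)
  qed
  then show ?thesis unfolding kappa_def using uw
    by (auto intro!: Sup_least)
qed

lemma kappa_lower:
  assumes G: "is_graph G" and vw: "v \<noteq> w" "w \<in> verts G" "v \<in> verts G"
    and H: "\<And>u. adj G v u \<Longrightarrow> u \<noteq> w \<Longrightarrow> adj G u w"
  shows "enat (card {x. adj G v x}) \<le> kappa G v w"
proof -
  let ?N = "{x. adj G v x}"
  define f where "f u = (if u = w then [v,w] else [v,u,w])" for u
  have fin: "finite ?N"
    using adj_verts[OF G] G unfolding is_graph_def
    by (metis (no_types, lifting) mem_Collect_eq rev_finite_subset subsetI)
  have inj: "inj_on f ?N" unfolding f_def by (rule inj_onI) (auto split: if_splits)
  have "int_disjoint_paths G v w (f ` ?N)"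
    unfolding int_disjoint_paths_def
  proof (intro conjI ballI impI)
    fix p assume "p \<in> f ` ?N"
    then obtain u where u: "adj G v u" "p = f u" by auto
    show "is_path G v w p"
    proof (cases "u = w")
      case True
      then show ?thesis using u vw unfolding f_def is_path_def by auto
    next
      case False
      have "adj G u w" using H u False by auto
      then show ?thesis using u vw False adj_verts[OF G] unfolding f_def is_path_def
        by (auto simp: less_Suc_eq nth_Cons split: nat.splits) 
    qed
  next
    fix p q assume "p \<in> f ` ?N" "q \<in> f ` ?N" "p \<noteq> q"
    then show "interior p \<inter> interior q = {}"
      unfolding f_def interior_def by auto
  qed
  moreover have "card (f ` ?N) = card ?N" using inj by (simp add: card_image)
  moreover have "finite (f ` ?N)" using fin by simp
  ultimately have "enat (card ?N) \<in> {enat (card P) | P. finite P \<and> int_disjoint_paths G v w P}"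
    by (intro CollectI exI[of _ "f ` ?N"]) simp
  then show ?thesis unfolding kappa_def using vw
    by (simp add: Sup_upper)
qed

lemma kappa_edgeless:
  assumes "edges G = {}" "u \<noteq> w"
  shows "kappa G u w = 0"
proof -
  have "P = {}" if "int_disjoint_paths G u w P" for P
  proof (rule ccontr)
    assume "P \<noteq> {}"
    then obtain p where "p \<in> P" by auto
    then have "is_path G u w p" using that unfolding int_disjoint_paths_def by auto
    then have "adj G u (p!1)" using path_second[OF _ assms(2)] by blast
    then show False using assms unfolding adj_def by auto
  qed
  moreover have "int_disjoint_paths G u w {}" by (simp add: int_disjoint_paths_def)
  ultimately have "{enat (card P) | P. finite P \<and> int_disjoint_paths G u w P} = {0}"
    by (auto simp: zero_enat_def) (metis card.empty finite.emptyI)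
  then show ?thesis unfolding kappa_def using assms by simp
qed


definition Gk :: "nat \<Rightarrow> nat sgraph" where
  "Gk k = \<lparr>verts = {0..2*k}, edges = {{i,j} | i j. i < j \<and> j \<le> 2*k \<and> (i = 0 \<or> 2*k < i + j)}\<rparr>"

definition Hk :: "nat \<Rightarrow> nat sgraph" where
  "Hk k = \<lparr>verts = {1..k}, edges = {}\<rparr>"

lemma adj_Gk: "adj (Gk k) u v \<longleftrightarrow> u \<noteq> v \<and> u \<le> 2*k \<and> v \<le> 2*k \<and> (u = 0 \<or> v = 0 \<or> 2*k < u + v)"
proof
  assume "adj (Gk k) u v"
  then obtain i j where "{u,v} = {i,j}" "i < j \<and> j \<le> 2*k \<and> (i = 0 \<or> 2*k < i + j)"
    unfolding adj_def Gk_def by auto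
  then show "u \<noteq> v \<and> u \<le> 2*k \<and> v \<le> 2*k \<and> (u = 0 \<or> v = 0 \<or> 2*k < u + v)"
    by (auto simp: doubleton_eq_iff)
next
  assume a: "u \<noteq> v \<and> u \<le> 2*k \<and> v \<le> 2*k \<and> (u = 0 \<or> v = 0 \<or> 2*k < u + v)"
  show "adj (Gk k) u v"
  proof (cases "u < v")
    case True
    then show ?thesis using a unfolding adj_def Gk_def
      by (simp only: sgraph.select_convs, intro CollectI exI[of _ u] exI[of _ v]) auto
  next
    case False
    then have "{u,v} = {v,u}" "v < u" using a by auto
    then show ?thesis using a unfolding adj_def Gk_def
      by (simp only: sgraph.select_convs, intro CollectI exI[of _ v] exI[of _ u]) auto
  qed
qed

lemma graph_Gk: "is_graph (Gk k)"
  unfolding is_graph_def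
proof (intro conjI)
  show "edges (Gk k) \<subseteq> {{u, v} |u v. u \<in> verts (Gk k) \<and> v \<in> verts (Gk k) \<and> u \<noteq> v}"
  proof
    fix e assume "e \<in> edges (Gk k)"
    then obtain i j where "e = {i,j}" "i < j" "j \<le> 2*k" unfolding Gk_def by (simp only: sgraph.select_convs mem_Collect_eq) blast
    moreover have "i \<in> verts (Gk k)" "j \<in> verts (Gk k)" using \<open>i < j\<close> \<open>j \<le> 2*k\<close> by (simp_all add: Gk_def)
    ultimately show "e \<in> {{u, v} |u v. u \<in> verts (Gk k) \<and> v \<in> verts (Gk k) \<and> u \<noteq> v}"
      by (intro CollectI exI[of _ i] exI[of _ j]) simp
  qed
qed (simp_all add: Gk_def)

lemma graph_Hk: "k \<ge> 1 \<Longrightarrow> is_graph (Hk k)"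
  unfolding is_graph_def Hk_def by auto

lemma verts_Gk: "verts (Gk k) = {0..2*k}" by (simp add: Gk_def)

lemma induced: "k \<ge> 1 \<Longrightarrow> induced_subgraph (Hk k) (Gk k)"
  unfolding induced_subgraph_def
proof (intro conjI)
  have "{e \<in> edges (Gk k). e \<subseteq> verts (Hk k)} = {}"
  proof (rule equals0I)
    fix e assume "e \<in> {e \<in> edges (Gk k). e \<subseteq> verts (Hk k)}"
    then obtain i j where "e = {i,j}" "i < j" "j \<le> 2*k" "i = 0 \<or> 2*k < i + j" "e \<subseteq> {1..k}"
      unfolding Gk_def Hk_def by auto
    then show False by auto
  qed
  then show "edges (Hk k) = {e \<in> edges (Gk k). e \<subseteq> verts (Hk k)}" by (simp add: Hk_def)
qed (auto simp: Hk_def Gk_def)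

lemma nbr_Gk:
  assumes "1 \<le> i" "i \<le> 2*k"
  shows "{x. adj (Gk k) i x} = insert 0 ({2*k+1-i..2*k} - {i})"
  using assms by (auto simp: adj_Gk)

lemma card_nbr:
  assumes "1 \<le> i" "i \<le> 2*k"
  shows "card {x. adj (Gk k) i x} = (if k < i then i else i + 1)"
proof -
  have "0 \<notin> {2*k+1-i..2*k} - {i}" using assms by auto
  then have "card {x. adj (Gk k) i x} = Suc (card ({2*k+1-i..2*k} - {i}))"
    using nbr_Gk[OF assms] by simp
  moreover have "card {2*k+1-i..2*k} = i" using assms by simp
  moreover have "i \<in> {2*k+1-i..2*k} \<longleftrightarrow> k < i" using assms by auto
  ultimately show ?thesis by auto
qed

lemma kappa_Gk0:
  assumes "1 \<le> i" "i \<le> 2*k"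
  shows "kappa (Gk k) i 0 = enat (if k < i then i else i + 1)"
proof -
  have "kappa (Gk k) i 0 \<le> enat (card {x. adj (Gk k) i x})"
    using kappa_upper[OF graph_Gk] assms by simp
  moreover have "enat (card {x. adj (Gk k) i x}) \<le> kappa (Gk k) i 0"
    using assms by (intro kappa_lower[OF graph_Gk]) (auto simp: verts_Gk adj_Gk)
  ultimately show ?thesis using card_nbr[OF assms] by simp
qed

lemma kappa_fin:
  assumes "u \<noteq> w"
  shows "kappa (Gk k) u w \<noteq> \<infinity>"
  using kappa_upper[OF graph_Gk assms, of k] by (cases "kappa (Gk k) u w") auto

lemma resolving_Gk: "k \<ge> 1 \<Longrightarrow> resolving (Gk k) {0, k}"
  unfolding resolving_def
proof (intro conjI ballI impI)
  assume k: "k \<ge> 1"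
  show "{0, k} \<subseteq> verts (Gk k)" by (auto simp: Gk_def)
  fix v1 v2 assume v: "v1 \<in> verts (Gk k)" "v2 \<in> verts (Gk k)"
    and eq: "\<forall>w\<in>{0, k}. kappa (Gk k) v1 w = kappa (Gk k) v2 w"
  have e0: "kappa (Gk k) v1 0 = kappa (Gk k) v2 0" and ek: "kappa (Gk k) v1 k = kappa (Gk k) v2 k"
    using eq by auto
  show "v1 = v2"
  proof (cases "v1 = 0 \<or> v2 = 0 \<or> v1 = k \<or> v2 = k")
    case True
    have inf: "kappa (Gk k) x y = \<infinity> \<longleftrightarrow> x = y" for x y
      using kappa_fin[of x y k] by (auto simp: kappa_def)
    show ?thesis using True e0 ek inf[of v1 0] inf[of v2 0] inf[of v1 k] inf[of v2 k] by metis
  next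
    case False
    then have "1 \<le> v1" "v1 \<le> 2*k" "1 \<le> v2" "v2 \<le> 2*k" using v by (auto simp: Gk_def)
    then have "(if k < v1 then v1 else v1 + 1) = (if k < v2 then v2 else v2 + 1)"
      using e0 kappa_Gk0 by simp
    then show ?thesis using False by (auto split: if_splits)
  qed
qed

lemma cdim_Gk: "k \<ge> 1 \<Longrightarrow> cdim (Gk k) \<le> 2"
  unfolding cdim_def
  by (rule Least_le) (use resolving_Gk in force)

lemma cdim_Hk: "k \<ge> 1 \<Longrightarrow> cdim (Hk k) \<ge> k - 1"
proof -
  assume k: "k \<ge> 1"
  have kap: "kappa (Hk k) u w = 0" if "u \<noteq> w" for u w
    using kappa_edgeless[OF _ that] by (simp add: Hk_def)
  have res: "resolving (Hk k) (verts (Hk k))"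
    unfolding resolving_def
  proof (intro conjI ballI impI)
    fix v1 v2 assume "v1 \<in> verts (Hk k)" "v2 \<in> verts (Hk k)"
      and eq: "\<forall>w\<in>verts (Hk k). kappa (Hk k) v1 w = kappa (Hk k) v2 w"
    show "v1 = v2"
    proof (rule ccontr)
      assume "v1 \<noteq> v2"
      then have "kappa (Hk k) v2 v1 = 0" using kap by auto
      moreover have "kappa (Hk k) v1 v1 = \<infinity>" by (simp add: kappa_def)
      ultimately show False using eq \<open>v1 \<in> verts (Hk k)\<close> by auto
    qed
  qed simp
  have "k - 1 \<le> card W" if "resolving (Hk k) W" for W
  proof (rule ccontr)
    assume "\<not> k - 1 \<le> card W"
    have sub: "W \<subseteq> {1..k}" using that by (simp add: resolving_def Hk_def)
    have "card ({1..k} - W) = k - card W" using sub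
      by (simp add: card_Diff_subset finite_subset)
    then have "card ({1..k} - W) \<ge> 2" using \<open>\<not> k - 1 \<le> card W\<close> by simp
    then have "Suc (Suc 0) \<le> card ({1..k} - W)" by simp
    then obtain a B where aB: "{1..k} - W = insert a B" "a \<notin> B" "Suc 0 \<le> card B"
      unfolding card_le_Suc_iff by blast
    then obtain b B' where "B = insert b B'"
      unfolding card_le_Suc_iff by blast
    then have ab: "a \<in> {1..k} - W" "b \<in> {1..k} - W" "a \<noteq> b" using aB by auto
    have "\<forall>w\<in>W. kappa (Hk k) a w = kappa (Hk k) b w"
    proof
      fix w assume "w \<in> W"
      then have "a \<noteq> w" "b \<noteq> w" using ab by auto
      then show "kappa (Hk k) a w = kappa (Hk k) b w" using kap by simp
    qed
    moreover have "a \<in> verts (Hk k)" "b \<in> verts (Hk k)" using ab by (auto simp: Hk_def)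
    ultimately have "a = b" using that unfolding resolving_def by blast
    then show False using ab by simp
  qed
  note lw = this
  have "\<exists>W. resolving (Hk k) W \<and> card W = cdim (Hk k)"
    unfolding cdim_def using res by (rule_tac LeastI_ex) blast
  then obtain W where "resolving (Hk k) W" "card W = cdim (Hk k)" by blast
  then show ?thesis using lw by metis
qed

theorem mainTheorem6:
  fixes \<epsilon> :: real
  assumes "\<epsilon> > 0"
  shows "\<exists>(G :: nat sgraph) H. is_graph G \<and> is_graph H \<and> induced_subgraph H G \<and>
           cdim H > 0 \<and> real (cdim G) / real (cdim H) \<le> \<epsilon>"
proof -
  define k where "k = nat \<lceil>2 / \<epsilon>\<rceil> + 2"
  have k1: "k \<ge> 2" unfolding k_def by simp
  have kr: "real k - 1 \<ge> 2 / \<epsilon>" unfolding k_def by linarith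
  have cH: "real (cdim (Hk k)) \<ge> real k - 1" using cdim_Hk[of k] k1 by simp
  have pos: "real k - 1 > 0" using k1 by simp
  have cG: "real (cdim (Gk k)) \<le> 2" using cdim_Gk[of k] k1 by simp
  have "real (cdim (Gk k)) / real (cdim (Hk k)) \<le> 2 / (real k - 1)"
    using cH cG pos by (intro frac_le) auto
  also have "\<dots> \<le> \<epsilon>" using kr pos assms
    by (simp add: divide_le_eq mult.commute pos_divide_le_eq)
  finally have r: "real (cdim (Gk k)) / real (cdim (Hk k)) \<le> \<epsilon>" .
  have "cdim (Hk k) > 0" using cH pos by simp
  then show ?thesis using r graph_Gk graph_Hk induced k1 by (intro exI[of _ "Gk k"] exI[of _ "Hk k"]) auto
qed

end
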